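(* Let $\kappa_0\in\mathbb{C}$ with $\Re(\kappa_0)>0$, let $N\ge 0$ and $p\ge 2$ be integers, and let $T\subset\mathbb{R}^2$ be a non-degenerate triangle with variable $\hat{x}=(\hat x_1,\hat x_2)$. Define the finite-dimensional spaces $$W_{\hat K}=W_\xi\otimes W_T,\qquad V_{\hat K}=\begin{pmatrix}W_\xi'\otimes W_T\\ W_\xi\otimes V_T\end{pmatrix},\qquad Q_{\hat K}=\begin{pmatrix}W_\xi\otimes Q_T\\ W_\xi'\otimes V_T^\perp\end{pmatrix},\qquad X_{\hat K}=W_\xi'\otimes X_T,$$ where $W_T=P^p(T)$, $V_T=(P^{p-1}(T))^2$, $V_T^\perp=\{\mathbf v^\perp:\mathbf v\in V_T\}$, $Q_T=X_T=P^{p-2}(T)$, and $W_\xi,W_\xi'$ are as in the context. Define the operators $$\hat\nabla=\begin{pmatrix}\hat\partial_\xi\otimes \mathrm{id}\\ \mathrm{id}\otimes\nabla_{\hat x}\end{pmatrix}:W_{\hat K}\to V_{\hat K},\qquad \hat\nabla\times=\begin{pmatrix}0&\mathrm{id}\otimes\nabla_{\hat x}^\perp\cdot\\ -\mathrm{id}\otimes\nabla_{\hat x}^\perp&\hat\partial_\xi\otimes\mathrm{id}^\perp\end{pmatrix}:V_{\hat K}\to Q_{\hat K},$$ $$\hat\nabla\cdot=\begin{pmatrix}\hat\partial_\xi\otimes\mathrm{id}&\mathrm{id}\otimes\nabla_{\hat x}\cdot\end{pmatrix}:Q_{\hat K}\to X_{\hat K}.$$ Then the sequence $$W_{\hat K}\xrightarrow{\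 \hat\nabla\ }V_{\hat K}\xrightarrow{\ \hat\nabla\times\ }Q_{\hat K}\xrightarrow{\ \hat\nabla\cdot\ }X_{\hat K}\xrightarrow{\ 0\ }\{0\}$$ is exact, i.e. $\hat\nabla W_{\hat K}=\ker(\hat\nabla\times)$, $\hat\nabla\times V_{\hat K}=\ker(\hat\nabla\cdot)$, and $\hat\nabla\cdot Q_{\hat K}=X_{\hat K}$.
   Context: $H^+(S^1)$ denotes the Hardy space of the unit disk (functions holomorphic in $\{|z|<1\}$ with $L^2$ boundary values on the unit circle), in which the monomials $z^0,z^1,\dots$ form an orthogonal basis. Let $\Pi_N=\mathrm{span}\{z^0,\dots,z^N\}$. For $u_0\in\mathbb{C}$ and $\hat U\in H^+(S^1)$ define $\mathcal{T}_\pm(u_0,\hat U)(z)=\tfrac12\big(u_0+(z\pm1)\hat U(z)\big)$; these maps $\mathbb{C}\times H^+(S^1)\to H^+(S^1)$ are injective. Set $W_\xi=\frac{1}{i\kappa_0}\mathcal{T}_-(\mathbb{C}\times\Pi_N)$ and $W_\xi'=\mathcal{T}_+(\mathbb{C}\times\Pi_N)$, and define $\hat\partial_\xi:W_\xi\to W_\xi'$ by $\hat\partial_\xi=i\kappa_0\,\mathcal{T}_+\mathcal{T}_-^{-1}$, i.e. $\hat\partial_\xi\big(\tfrac{1}{i\kappa_0}\mathcal{T}_-(u_0,\hat U)\big)=\mathcal{T}_+(u_0,\hat U)$. $P^k(T)$ is the space of polynomials of total degree at most $k$ in $\hat x$ on $T$. For a vector $\mathbf v=(v_1,v_2)$, $\mathbf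 v^\perp=(-v_2,v_1)$; $\mathrm{id}^\perp$ denotes the map $\mathbf v\mapsto\mathbf v^\perp$; $\nabla_{\hat x}$ is the 2D gradient, $\nabla_{\hat x}^\perp=(-\partial_{\hat x_2},\partial_{\hat x_1})^T$ (so $\nabla_{\hat x}^\perp\cdot$ is the scalar curl), and $\nabla_{\hat x}\cdot$ the 2D divergence. Tensor products are algebraic tensor products of finite-dimensional function spaces (functions of $(z,\hat x)$), with operators acting factorwise; $\mathrm{id}$ is the identity. *)

theory Defs
  imports "HOL-Analysis.Analysis"
begin

type_synonym sfun = "complex \<Rightarrow> real \<times> real \<Rightarrow> complex"

definition PiN :: "nat \<Rightarrow> (complex \<Rightarrow> complex) set" where
  "PiN N = {f. \<exists>c :: nat \<Rightarrow> complex. f = (\<lambda>z. \<Sum>i\<le>N. c i * z ^ i)}"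

definition Tminus :: "complex \<Rightarrow> (complex \<Rightarrow> complex) \<Rightarrow> complex \<Rightarrow> complex" where
  "Tminus u0 U = (\<lambda>z. (u0 + (z - 1) * U z) / 2)"

definition Tplus :: "complex \<Rightarrow> (complex \<Rightarrow> complex) \<Rightarrow> complex \<Rightarrow> complex" where
  "Tplus u0 U = (\<lambda>z. (u0 + (z + 1) * U z) / 2)"

definition Wxi :: "complex \<Rightarrow> nat \<Rightarrow> (complex \<Rightarrow> complex) set" where
  "Wxi \<kappa>0 N = {(\<lambda>z. Tminus u0 U z / (\<i> * \<kappa>0)) | u0 U. U \<in> PiN N}"

definition Wxi' :: "nat \<Rightarrow> (complex \<Rightarrow> complex) set" where
  "Wxi' N = {Tplus u0 U | u0 U. U \<in> PiN N}"

text \<open>hat-partial-xi = i kappa0 T_+ T_-^{-1}.\<close>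
definition dxi :: "complex \<Rightarrow> nat \<Rightarrow> (complex \<Rightarrow> complex) \<Rightarrow> (complex \<Rightarrow> complex)" where
  "dxi \<kappa>0 N w = (THE g. \<exists>u0 U. U \<in> PiN N \<and>
      w = (\<lambda>z. Tminus u0 U z / (\<i> * \<kappa>0)) \<and> g = Tplus u0 U)"

definition Pk :: "nat \<Rightarrow> (real \<times> real \<Rightarrow> complex) set" where
  "Pk k = {f. \<exists>c :: nat \<Rightarrow> nat \<Rightarrow> complex.
      f = (\<lambda>(x1, x2). \<Sum>i\<le>k. \<Sum>j\<le>k - i. c i j * complex_of_real x1 ^ i * complex_of_real x2 ^ j)}"

definition tensorP :: "(complex \<Rightarrow> complex) set \<Rightarrow> (real \<times> real \<Rightarrow> complex) set \<Rightarrow> sfun set" where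
  "tensorP A B = {F. \<exists>(n::nat) a b. (\<forall>k<n. a k \<in> A \<and> b k \<in> B) \<and>
      F = (\<lambda>z x. \<Sum>k<n. a k z * b k x)}"

definition dxiT :: "complex \<Rightarrow> nat \<Rightarrow> sfun \<Rightarrow> sfun" where
  "dxiT \<kappa>0 N F = (\<lambda>z x. dxi \<kappa>0 N (\<lambda>z'. F z' x) z)"

definition d1 :: "sfun \<Rightarrow> sfun" where
  "d1 F = (\<lambda>z x. vector_derivative (\<lambda>t. F z (t, snd x)) (at (fst x)))"

definition d2 :: "sfun \<Rightarrow> sfun" where
  "d2 F = (\<lambda>z x. vector_derivative (\<lambda>t. F z (fst x, t)) (at (snd x)))"

definition zf :: sfun where "zf = (\<lambda>z x. 0)"

definition WK :: "complex \<Rightarrow> nat \<Rightarrow> nat \<Rightarrow> sfun set" where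
  "WK \<kappa>0 N p = tensorP (Wxi \<kappa>0 N) (Pk p)"

definition VK :: "complex \<Rightarrow> nat \<Rightarrow> nat \<Rightarrow> (sfun \<times> (sfun \<times> sfun)) set" where
  "VK \<kappa>0 N p = {(u, (v1, v2)). u \<in> tensorP (Wxi' N) (Pk p) \<and>
      v1 \<in> tensorP (Wxi \<kappa>0 N) (Pk (p - 1)) \<and> v2 \<in> tensorP (Wxi \<kappa>0 N) (Pk (p - 1))}"

text \<open>Second component: W_xi' tensorP V_T^perp, i.e. perp of elements of W_xi' tensorP V_T.\<close>
definition QK :: "complex \<Rightarrow> nat \<Rightarrow> nat \<Rightarrow> (sfun \<times> (sfun \<times> sfun)) set" where
  "QK \<kappa>0 N p = {(q, (w1, w2)). q \<in> tensorP (Wxi \<kappa>0 N) (Pk (p - 2)) \<and>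
      (\<exists>g1 g2. g1 \<in> tensorP (Wxi' N) (Pk (p - 1)) \<and> g2 \<in> tensorP (Wxi' N) (Pk (p - 1)) \<and>
         w1 = (\<lambda>z x. - g2 z x) \<and> w2 = g1)}"

definition XK :: "nat \<Rightarrow> nat \<Rightarrow> sfun set" where
  "XK N p = tensorP (Wxi' N) (Pk (p - 2))"

definition gradK :: "complex \<Rightarrow> nat \<Rightarrow> sfun \<Rightarrow> sfun \<times> (sfun \<times> sfun)" where
  "gradK \<kappa>0 N F = (dxiT \<kappa>0 N F, (d1 F, d2 F))"

text \<open>curl (u,v) = (curl_x v, -rot_x u + (dxi v)^perp), with
  rot_x u = (-d2 u, d1 u), curl_x v = -d2 v1 + d1 v2, perp (a,b) = (-b,a).\<close>
definition curlK :: "complex \<Rightarrow> nat \<Rightarrow> sfun \<times> (sfun \<times> sfun) \<Rightarrow> sfun \<times> (sfun \<times> sfun)" where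
  "curlK \<kappa>0 N V = (case V of (u, (v1, v2)) \<Rightarrow>
      ((\<lambda>z x. - d2 v1 z x + d1 v2 z x),
       ((\<lambda>z x. d2 u z x - dxiT \<kappa>0 N v2 z x), (\<lambda>z x. - d1 u z x + dxiT \<kappa>0 N v1 z x))))"

definition divK :: "complex \<Rightarrow> nat \<Rightarrow> sfun \<times> (sfun \<times> sfun) \<Rightarrow> sfun" where
  "divK \<kappa>0 N Q = (case Q of (q, (w1, w2)) \<Rightarrow>
      (\<lambda>z x. dxiT \<kappa>0 N q z x + d1 w1 z x + d2 w2 z x))"

end

theory Submission
  imports Defs
begin


definition GP :: "nat set \<Rightarrow> (nat \<Rightarrow> nat set) \<Rightarrow> (nat \<Rightarrow> nat \<Rightarrow> complex) \<Rightarrow> (nat\<Rightarrow>nat\<Rightarrow>nat) \<Rightarrow> (nat\<Rightarrow>nat\<Rightarrow>nat) \<Rightarrow> real\<times>real \<Rightarrow> complex" where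
 "GP I J e \<alpha> \<beta> = (\<lambda>x. \<Sum>i\<in>I. \<Sum>j\<in>J i. e i j * of_real (fst x) ^ \<alpha> i j * of_real (snd x) ^ \<beta> i j)"

lemma Pk_GP: "f \<in> Pk k \<longleftrightarrow> (\<exists>c. f = GP {..k} (\<lambda>i. {..k-i}) c (\<lambda>i j. i) (\<lambda>i j. j))"
  unfolding Pk_def GP_def by (simp add: case_prod_beta')

lemma mono_d1:
  "((\<lambda>t. e * complex_of_real t ^ a * K) has_vector_derivative (e * of_nat a * complex_of_real s ^ (a - 1) * K)) (at s)"
proof -
  have "((\<lambda>w. e * w ^ a * K) has_field_derivative (e * of_nat a * (of_real s) ^ (a - 1) * K)) (at (of_real s))"
    by (auto intro!: derivative_eq_intros)
  then show ?thesis by (rule has_vector_derivative_real_field)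
qed

lemma mono_d2:
  "((\<lambda>t. e * K * complex_of_real t ^ a) has_vector_derivative (e * K * (of_nat a * complex_of_real s ^ (a - 1)))) (at s)"
proof -
  have "((\<lambda>w. e * K * w ^ a) has_field_derivative (e * K * (of_nat a * (of_real s) ^ (a - 1)))) (at (of_real s))"
    by (auto intro!: derivative_eq_intros)
  then show ?thesis by (rule has_vector_derivative_real_field)
qed

lemma GP_d1:
  assumes "finite I" "\<And>i. i \<in> I \<Longrightarrow> finite (J i)"
  shows "((\<lambda>t. GP I J e \<alpha> \<beta> (t,y)) has_vector_derivative
     GP I J (\<lambda>i j. e i j * of_nat (\<alpha> i j)) (\<lambda>i j. \<alpha> i j - 1) \<beta> (s,y)) (at s)"
  unfolding GP_def fst_conv snd_conv by (intro has_vector_derivative_sum) (rule mono_d1)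

lemma GP_d2:
  assumes "finite I" "\<And>i. i \<in> I \<Longrightarrow> finite (J i)"
  shows "((\<lambda>t. GP I J e \<alpha> \<beta> (y,t)) has_vector_derivative
     GP I J (\<lambda>i j. e i j * of_nat (\<beta> i j)) \<alpha> (\<lambda>i j. \<beta> i j - 1) (y,s)) (at s)"
proof -
  have "((\<lambda>t. GP I J e \<alpha> \<beta> (y,t)) has_vector_derivative
     (\<Sum>i\<in>I. \<Sum>j\<in>J i. e i j * of_real y ^ \<alpha> i j * (of_nat (\<beta> i j) * of_real s ^ (\<beta> i j - 1)))) (at s)"
    unfolding GP_def fst_conv snd_conv by (intro has_vector_derivative_sum) (rule mono_d2)
  moreover have "(\<Sum>i\<in>I. \<Sum>j\<in>J i. e i j * of_real y ^ \<alpha> i j * (of_nat (\<beta> i j) * of_real s ^ (\<beta> i j - 1)))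
     = GP I J (\<lambda>i j. e i j * of_nat (\<beta> i j)) \<alpha> (\<lambda>i j. \<beta> i j - 1) (y,s)"
    unfolding GP_def by (simp add: mult_ac)
  ultimately show ?thesis by simp
qed

definition P1 :: "(real\<times>real \<Rightarrow> complex) \<Rightarrow> real\<times>real \<Rightarrow> complex" where
  "P1 b = (\<lambda>x. vector_derivative (\<lambda>t. b (t, snd x)) (at (fst x)))"
definition P2 :: "(real\<times>real \<Rightarrow> complex) \<Rightarrow> real\<times>real \<Rightarrow> complex" where
  "P2 b = (\<lambda>x. vector_derivative (\<lambda>t. b (fst x, t)) (at (snd x)))"

lemma GP_P1:
  assumes "finite I" "\<And>i. i \<in> I \<Longrightarrow> finite (J i)"
  shows "P1 (GP I J e \<alpha> \<beta>) = GP I J (\<lambda>i j. e i j * of_nat (\<alpha> i j)) (\<lambda>i j. \<alpha> i j - 1) \<beta>"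
  unfolding P1_def using vector_derivative_at[OF GP_d1[OF assms]] by auto

lemma GP_P2:
  assumes "finite I" "\<And>i. i \<in> I \<Longrightarrow> finite (J i)"
  shows "P2 (GP I J e \<alpha> \<beta>) = GP I J (\<lambda>i j. e i j * of_nat (\<beta> i j)) \<alpha> (\<lambda>i j. \<beta> i j - 1)"
  unfolding P2_def using vector_derivative_at[OF GP_d2[OF assms]] by auto

lemma Pk_zero: "(\<lambda>x. 0) \<in> Pk k"
proof -
  have "(\<lambda>x. 0) = GP {..k} (\<lambda>i. {..k-i}) (\<lambda>i j. 0) (\<lambda>i j. i) (\<lambda>i j. j)" by (simp add: GP_def)
  then show ?thesis unfolding Pk_GP by blast
qed

lemma Pk_add: assumes "f \<in> Pk k" "g \<in> Pk k" shows "(\<lambda>x. f x + g x) \<in> Pk k"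
proof -
  obtain c d where "f = GP {..k} (\<lambda>i. {..k-i}) c (\<lambda>i j. i) (\<lambda>i j. j)" "g = GP {..k} (\<lambda>i. {..k-i}) d (\<lambda>i j. i) (\<lambda>i j. j)"
    using assms Pk_GP by metis
  then have "(\<lambda>x. f x + g x) = GP {..k} (\<lambda>i. {..k-i}) (\<lambda>i j. c i j + d i j) (\<lambda>i j. i) (\<lambda>i j. j)"
    unfolding GP_def by (simp add: sum.distrib[symmetric] ring_distribs)
  then show ?thesis unfolding Pk_GP by blast
qed

lemma Pk_smult: assumes "f \<in> Pk k" shows "(\<lambda>x. a * f x) \<in> Pk k"
proof -
  obtain c where "f = GP {..k} (\<lambda>i. {..k-i}) c (\<lambda>i j. i) (\<lambda>i j. j)"
    using assms Pk_GP by metis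
  then have "(\<lambda>x. a * f x) = GP {..k} (\<lambda>i. {..k-i}) (\<lambda>i j. a * c i j) (\<lambda>i j. i) (\<lambda>i j. j)"
    unfolding GP_def by (simp add: sum_distrib_left mult.assoc)
  then show ?thesis unfolding Pk_GP by blast
qed

lemma Pk_sum: "(\<And>i. i \<in> I \<Longrightarrow> f i \<in> Pk k) \<Longrightarrow> (\<lambda>x. \<Sum>i\<in>I. f i x) \<in> Pk k"
proof (induction I rule: infinite_finite_induct)
  case (infinite A) then show ?case by (simp add: Pk_zero)
next
  case empty then show ?case by (simp add: Pk_zero)
next
  case (insert a A) then show ?case using Pk_add[of "f a" k "\<lambda>x. \<Sum>i\<in>A. f i x"] by simp
qed

lemma Pk_mono: assumes "i + j \<le> k" shows "(\<lambda>x. complex_of_real (fst x) ^ i * of_real (snd x) ^ j) \<in> Pk k"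
proof -
  let ?c = "\<lambda>i' j'. if i' = i \<and> j' = j then 1 else (0::complex)"
  have "GP {..k} (\<lambda>i. {..k-i}) ?c (\<lambda>i j. i) (\<lambda>i j. j) = (\<lambda>x. complex_of_real (fst x) ^ i * of_real (snd x) ^ j)"
  proof
    fix x
    define G where "G i' j' = complex_of_real (fst x) ^ i' * of_real (snd x) ^ j'" for i' j'
    have "GP {..k} (\<lambda>i. {..k-i}) ?c (\<lambda>i j. i) (\<lambda>i j. j) x = 
       (\<Sum>i'\<in>{..k}. \<Sum>j'\<in>{..k-i'}. if i' = i then (if j' = j then G i' j' else 0) else 0)"
      unfolding GP_def by (intro sum.cong refl) (simp add: G_def)
    also have "\<dots> = (\<Sum>i'\<in>{..k}. if i' = i then (\<Sum>j'\<in>{..k-i'}. if j' = j then G i' j' else 0) else 0)"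
      by (intro sum.cong refl) simp
    also have "\<dots> = (\<Sum>i'\<in>{..k}. if i' = i then (if j \<in> {..k-i'} then G i' j else 0) else 0)"
      by (intro sum.cong refl) (simp only: sum.delta finite_atMost)
    also have "\<dots> = (if i \<in> {..k} then (if j \<in> {..k-i} then G i j else 0) else 0)"
      by (simp only: sum.delta finite_atMost)
    also have "\<dots> = G i j" using assms by simp
    finally show "GP {..k} (\<lambda>i. {..k-i}) ?c (\<lambda>i j. i) (\<lambda>i j. j) x = complex_of_real (fst x) ^ i * of_real (snd x) ^ j"
      by (simp add: G_def)
  qed
  then have "(\<lambda>x. complex_of_real (fst x) ^ i * of_real (snd x) ^ j) = GP {..k} (\<lambda>i. {..k-i}) ?c (\<lambda>i j. i) (\<lambda>i j. j)"
    by (rule sym)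
  then show ?thesis unfolding Pk_GP by (rule exI[of _ ?c])
qed

lemma Pk_P1: assumes "b \<in> Pk k" shows "P1 b \<in> Pk (k - 1)"
proof -
  obtain c where b: "b = GP {..k} (\<lambda>i. {..k-i}) c (\<lambda>i j. i) (\<lambda>i j. j)" using assms Pk_GP by blast
  have "P1 b = GP {..k} (\<lambda>i. {..k-i}) (\<lambda>i j. c i j * of_nat i) (\<lambda>i j. i - 1) (\<lambda>i j. j)"
    unfolding b by (rule GP_P1) auto
  also have "\<dots> \<in> Pk (k - 1)" unfolding GP_def
  proof (intro Pk_sum)
    fix i j assume i: "i \<in> {..k}" and j: "j \<in> {..k-i}"
    show "(\<lambda>x. c i j * of_nat i * complex_of_real (fst x) ^ (i - 1) * complex_of_real (snd x) ^ j) \<in> Pk (k - 1)"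
    proof (cases "i = 0")
      case True then show ?thesis by (simp add: Pk_zero)
    next
      case False
      then have "(i - 1) + j \<le> k - 1" using i j by auto
      from Pk_smult[OF Pk_mono[OF this], of "c i j * of_nat i"] show ?thesis by (simp add: mult.assoc)
    qed
  qed
  finally show ?thesis .
qed

lemma Pk_P2: assumes "b \<in> Pk k" shows "P2 b \<in> Pk (k - 1)"
proof -
  obtain c where b: "b = GP {..k} (\<lambda>i. {..k-i}) c (\<lambda>i j. i) (\<lambda>i j. j)" using assms Pk_GP by blast
  have "P2 b = GP {..k} (\<lambda>i. {..k-i}) (\<lambda>i j. c i j * of_nat j) (\<lambda>i j. i) (\<lambda>i j. j - 1)"
    unfolding b by (rule GP_P2) auto
  also have "\<dots> \<in> Pk (k - 1)" unfolding GP_def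
  proof (intro Pk_sum)
    fix i j assume i: "i \<in> {..k}" and j: "j \<in> {..k-i}"
    show "(\<lambda>x. c i j * of_nat j * complex_of_real (fst x) ^ i * complex_of_real (snd x) ^ (j - 1)) \<in> Pk (k - 1)"
    proof (cases "j = 0")
      case True then show ?thesis by (simp add: Pk_zero)
    next
      case False
      then have "i + (j - 1) \<le> k - 1" using i j by auto
      from Pk_smult[OF Pk_mono[OF this], of "c i j * of_nat j"] show ?thesis by (simp add: mult.assoc)
    qed
  qed
  finally show ?thesis .
qed

lemma Pk_comm: assumes "b \<in> Pk k" shows "P1 (P2 b) = P2 (P1 b)"
proof -
  obtain c where b: "b = GP {..k} (\<lambda>i. {..k-i}) c (\<lambda>i j. i) (\<lambda>i j. j)" using assms Pk_GP by blast
  have "P1 (P2 b) = GP {..k} (\<lambda>i. {..k-i}) (\<lambda>i j. c i j * of_nat j * of_nat i) (\<lambda>i j. i - 1) (\<lambda>i j. j - 1)"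
    unfolding b by (subst GP_P2, simp, simp, subst GP_P1, simp, simp, rule refl)
  moreover have "P2 (P1 b) = GP {..k} (\<lambda>i. {..k-i}) (\<lambda>i j. c i j * of_nat i * of_nat j) (\<lambda>i j. i - 1) (\<lambda>i j. j - 1)"
    unfolding b by (subst GP_P1, simp, simp, subst GP_P2, simp, simp, rule refl)
  moreover have "(\<lambda>i j. c i j * of_nat j * of_nat i) = (\<lambda>i j. c i j * of_nat i * (of_nat j :: complex))"
    by (simp add: mult_ac)
  ultimately show ?thesis by (simp only:)
qed

lemma Pk_hd1: assumes "b \<in> Pk k" shows "((\<lambda>t. b (t,y)) has_vector_derivative P1 b (s,y)) (at s)"
proof -
  obtain c where b: "b = GP {..k} (\<lambda>i. {..k-i}) c (\<lambda>i j. i) (\<lambda>i j. j)" using assms Pk_GP by blast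
  show ?thesis unfolding b by (subst GP_P1, simp, simp, rule GP_d1, simp, simp)
qed

lemma Pk_hd2: assumes "b \<in> Pk k" shows "((\<lambda>t. b (y,t)) has_vector_derivative P2 b (y,s)) (at s)"
proof -
  obtain c where b: "b = GP {..k} (\<lambda>i. {..k-i}) c (\<lambda>i j. i) (\<lambda>i j. j)" using assms Pk_GP by blast
  show ?thesis unfolding b by (subst GP_P2, simp, simp, rule GP_d2, simp, simp)
qed



lemma PiN_cont: "U \<in> PiN N \<Longrightarrow> isCont U z"
  unfolding PiN_def by (auto intro!: continuous_intros)

lemma PiN_zero: "(\<lambda>z. 0) \<in> PiN N"
  unfolding PiN_def by (auto intro!: exI[of _ "\<lambda>i. 0"])

lemma PiN_add: assumes "U \<in> PiN N" "V \<in> PiN N" shows "(\<lambda>z. U z + V z) \<in> PiN N"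
proof -
  obtain c d where "U = (\<lambda>z. \<Sum>i\<le>N. c i * z ^ i)" "V = (\<lambda>z. \<Sum>i\<le>N. d i * z ^ i)"
    using assms unfolding PiN_def by blast
  then have "(\<lambda>z. U z + V z) = (\<lambda>z. \<Sum>i\<le>N. (c i + d i) * z ^ i)"
    by (simp add: sum.distrib[symmetric] ring_distribs)
  then show ?thesis unfolding PiN_def by (intro CollectI exI[of _ "\<lambda>i. c i + d i"])
qed

lemma PiN_smult: assumes "U \<in> PiN N" shows "(\<lambda>z. a * U z) \<in> PiN N"
proof -
  obtain c where "U = (\<lambda>z. \<Sum>i\<le>N. c i * z ^ i)"
    using assms unfolding PiN_def by blast
  then have "(\<lambda>z. a * U z) = (\<lambda>z. \<Sum>i\<le>N. (a * c i) * z ^ i)"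
    by (simp add: sum_distrib_left mult.assoc)
  then show ?thesis unfolding PiN_def by (intro CollectI exI[of _ "\<lambda>i. a * c i"])
qed

lemma T_uniq:
  assumes "U \<in> PiN N" "U' \<in> PiN N" "\<forall>z. u0 + (z - s) * U z = u0' + (z - s) * U' z"
  shows "u0 = u0' \<and> U = U'"
proof -
  have u: "u0 = u0'" using assms(3)[rule_format, of s] by simp
  have ne': "U z = U' z" if "z \<noteq> s" for z using assms(3)[rule_format, of z] u that by simp
  have ne: "U z - U' z = 0" if "z \<noteq> s" for z using ne'[OF that] by simp
  let ?h = "\<lambda>z. U z - U' z"
  have c: "isCont ?h s" using PiN_cont assms(1,2) by (intro continuous_intros) auto
  have 1: "(?h \<longlongrightarrow> ?h s) (at s)" using c isCont_def by blast
  have 2: "(?h \<longlongrightarrow> 0) (at s)"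
    by (rule tendsto_eventually, unfold eventually_at_filter, rule always_eventually) (simp add: ne)
  have "?h s = 0" using tendsto_unique[OF at_neq_bot 1 2] .
  then have "U = U'" using ne by (metis eq_iff_diff_eq_0 ext)
  with u show ?thesis by simp
qed

lemma Tm_inj:
  assumes "\<kappa>0 \<noteq> 0" "U \<in> PiN N" "U' \<in> PiN N"
    "(\<lambda>z. Tminus u0 U z / (\<i> * \<kappa>0)) = (\<lambda>z. Tminus u0' U' z / (\<i> * \<kappa>0))"
  shows "u0 = u0' \<and> U = U'"
proof -
  have "\<forall>z. u0 + (z - 1) * U z = u0' + (z - 1) * U' z"
  proof
    fix z from fun_cong[OF assms(4), of z] show "u0 + (z - 1) * U z = u0' + (z - 1) * U' z"
      using assms(1) by (simp add: Tminus_def)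
  qed
  then show ?thesis using T_uniq assms(2,3) by blast
qed

lemma Tp_inj:
  assumes "U \<in> PiN N" "U' \<in> PiN N" "Tplus u0 U = Tplus u0' U'"
  shows "u0 = u0' \<and> U = U'"
proof -
  have "\<forall>z. u0 + (z - (-1)) * U z = u0' + (z - (-1)) * U' z"
  proof
    fix z from fun_cong[OF assms(3), of z] have "(u0 + (z + 1) * U z)/2 = (u0' + (z + 1) * U' z)/(2::complex)"
      by (simp only: Tplus_def)
    then show "u0 + (z - (-1)) * U z = u0' + (z - (-1)) * U' z"
      by (simp only: divide_cancel_right diff_minus_eq_add) (erule disjE, simp, assumption)
  qed
  then show ?thesis using T_uniq assms(1,2) by blast
qed

definition Einv :: "complex \<Rightarrow> nat \<Rightarrow> (complex \<Rightarrow> complex) \<Rightarrow> (complex \<Rightarrow> complex)" where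
  "Einv \<kappa>0 N v = (THE g. \<exists>u0 U. U \<in> PiN N \<and> v = Tplus u0 U \<and> g = (\<lambda>z. Tminus u0 U z / (\<i> * \<kappa>0)))"

lemma dxi_eq: assumes "\<kappa>0 \<noteq> 0" "U \<in> PiN N"
  shows "dxi \<kappa>0 N (\<lambda>z. Tminus u0 U z / (\<i> * \<kappa>0)) = Tplus u0 U"
  unfolding dxi_def
proof (rule the_equality)
  show "\<exists>u0' U'. U' \<in> PiN N \<and> (\<lambda>z. Tminus u0 U z / (\<i> * \<kappa>0)) = (\<lambda>z. Tminus u0' U' z / (\<i> * \<kappa>0)) \<and> Tplus u0 U = Tplus u0' U'"
    using assms by blast
next
  fix g assume "\<exists>u0' U'. U' \<in> PiN N \<and> (\<lambda>z. Tminus u0 U z / (\<i> * \<kappa>0)) = (\<lambda>z. Tminus u0' U' z / (\<i> * \<kappa>0)) \<and> g = Tplus u0' U'"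
  then obtain u0' U' where "U' \<in> PiN N" "(\<lambda>z. Tminus u0 U z / (\<i> * \<kappa>0)) = (\<lambda>z. Tminus u0' U' z / (\<i> * \<kappa>0))" "g = Tplus u0' U'"
    by blast
  then show "g = Tplus u0 U" using Tm_inj[OF assms(1,2)] by metis
qed

lemma Einv_eq: assumes "U \<in> PiN N"
  shows "Einv \<kappa>0 N (Tplus u0 U) = (\<lambda>z. Tminus u0 U z / (\<i> * \<kappa>0))"
  unfolding Einv_def
proof (rule the_equality)
  show "\<exists>u0' U'. U' \<in> PiN N \<and> Tplus u0 U = Tplus u0' U' \<and> (\<lambda>z. Tminus u0 U z / (\<i> * \<kappa>0)) = (\<lambda>z. Tminus u0' U' z / (\<i> * \<kappa>0))"
    using assms by blast
next
  fix g assume "\<exists>u0' U'. U' \<in> PiN N \<and> Tplus u0 U = Tplus u0' U' \<and> g = (\<lambda>z. Tminus u0' U' z / (\<i> * \<kappa>0))"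
  then obtain u0' U' where "U' \<in> PiN N" "Tplus u0 U = Tplus u0' U'" "g = (\<lambda>z. Tminus u0' U' z / (\<i> * \<kappa>0))"
    by blast
  then show "g = (\<lambda>z. Tminus u0 U z / (\<i> * \<kappa>0))" using Tp_inj[OF assms] by metis
qed

lemma W_iff: "w \<in> Wxi \<kappa>0 N \<longleftrightarrow> (\<exists>u0 U. U \<in> PiN N \<and> w = (\<lambda>z. Tminus u0 U z / (\<i> * \<kappa>0)))"
  unfolding Wxi_def by blast

lemma W'_iff: "w \<in> Wxi' N \<longleftrightarrow> (\<exists>u0 U. U \<in> PiN N \<and> w = Tplus u0 U)"
  unfolding Wxi'_def by blast

definition linsp :: "(complex \<Rightarrow> complex) set \<Rightarrow> bool" where
  "linsp A \<longleftrightarrow> (\<lambda>z. 0) \<in> A \<and> (\<forall>f\<in>A. \<forall>g\<in>A. (\<lambda>z. f z + g z) \<in> A) \<and> (\<forall>f\<in>A. \<forall>c. (\<lambda>z. c * f z) \<in> A)"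

definition linop :: "((complex \<Rightarrow> complex) \<Rightarrow> (complex \<Rightarrow> complex)) \<Rightarrow> (complex \<Rightarrow> complex) set \<Rightarrow> bool" where
  "linop L A \<longleftrightarrow> (\<forall>f\<in>A. \<forall>g\<in>A. L (\<lambda>z. f z + g z) = (\<lambda>z. L f z + L g z)) \<and> (\<forall>f\<in>A. \<forall>c. L (\<lambda>z. c * f z) = (\<lambda>z. c * L f z))"

lemma Tm_add: assumes "\<kappa>0 \<noteq> 0" shows
  "(\<lambda>z. Tminus u U z / (\<i> * \<kappa>0) + Tminus u' U' z / (\<i> * \<kappa>0)) = (\<lambda>z. Tminus (u+u') (\<lambda>z. U z + U' z) z / (\<i> * \<kappa>0))"
  by (rule ext) (simp add: Tminus_def add_divide_distrib[symmetric] algebra_simps)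

lemma Tm_smult: assumes "\<kappa>0 \<noteq> 0" shows
  "(\<lambda>z. c * (Tminus u U z / (\<i> * \<kappa>0))) = (\<lambda>z. Tminus (c*u) (\<lambda>z. c * U z) z / (\<i> * \<kappa>0))"
  by (rule ext) (simp add: Tminus_def times_divide_eq_right[symmetric] algebra_simps)

lemma Tp_add: "(\<lambda>z. Tplus u U z + Tplus u' U' z) = Tplus (u+u') (\<lambda>z. U z + U' z)"
  by (rule ext) (simp add: Tplus_def add_divide_distrib[symmetric] algebra_simps)

lemma Tp_smult: "(\<lambda>z. c * Tplus u U z) = Tplus (c*u) (\<lambda>z. c * U z)"
  by (rule ext) (simp add: Tplus_def times_divide_eq_right[symmetric] algebra_simps)

lemma linsp_W: assumes "\<kappa>0 \<noteq> 0" shows "linsp (Wxi \<kappa>0 N)"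
  unfolding linsp_def
proof (intro conjI ballI allI)
  have "(\<lambda>z. 0) = (\<lambda>z. Tminus 0 (\<lambda>z. 0) z / (\<i> * \<kappa>0))" by (simp add: Tminus_def)
  then show "(\<lambda>z. 0) \<in> Wxi \<kappa>0 N" unfolding W_iff using PiN_zero by blast
next
  fix f g assume "f \<in> Wxi \<kappa>0 N" "g \<in> Wxi \<kappa>0 N"
  then obtain u U u' U' where U: "U \<in> PiN N" "U' \<in> PiN N" and fg: "f = (\<lambda>z. Tminus u U z / (\<i> * \<kappa>0))"
     "g = (\<lambda>z. Tminus u' U' z / (\<i> * \<kappa>0))" unfolding W_iff by auto
  show "(\<lambda>z. f z + g z) \<in> Wxi \<kappa>0 N"
    unfolding fg Tm_add[OF assms] W_iff using PiN_add[OF U] by blast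
next
  fix f c assume "f \<in> Wxi \<kappa>0 N"
  then obtain u U where U: "U \<in> PiN N" and fg: "f = (\<lambda>z. Tminus u U z / (\<i> * \<kappa>0))" unfolding W_iff by auto
  show "(\<lambda>z. c * f z) \<in> Wxi \<kappa>0 N"
    unfolding fg Tm_smult[OF assms] W_iff using PiN_smult[OF U] by blast
qed

lemma linsp_W': "linsp (Wxi' N)"
  unfolding linsp_def
proof (intro conjI ballI allI)
  have "(\<lambda>z. 0) = Tplus 0 (\<lambda>z. 0)" by (simp add: Tplus_def)
  then show "(\<lambda>z. 0) \<in> Wxi' N" unfolding W'_iff using PiN_zero by blast
next
  fix f g assume "f \<in> Wxi' N" "g \<in> Wxi' N"
  then obtain u U u' U' where U: "U \<in> PiN N" "U' \<in> PiN N" and fg: "f = Tplus u U" "g = Tplus u' U'"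
    unfolding W'_iff by auto
  show "(\<lambda>z. f z + g z) \<in> Wxi' N"
    unfolding fg Tp_add W'_iff using PiN_add[OF U] by blast
next
  fix f c assume "f \<in> Wxi' N"
  then obtain u U where U: "U \<in> PiN N" and fg: "f = Tplus u U" unfolding W'_iff by auto
  show "(\<lambda>z. c * f z) \<in> Wxi' N"
    unfolding fg Tp_smult W'_iff using PiN_smult[OF U] by blast
qed

lemma linop_dxi: assumes "\<kappa>0 \<noteq> 0" shows "linop (dxi \<kappa>0 N) (Wxi \<kappa>0 N)"
  unfolding linop_def
proof (intro conjI ballI allI)
  fix f g assume "f \<in> Wxi \<kappa>0 N" "g \<in> Wxi \<kappa>0 N"
  then obtain u U u' U' where U: "U \<in> PiN N" "U' \<in> PiN N" and fg: "f = (\<lambda>z. Tminus u U z / (\<i> * \<kappa>0))"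
     "g = (\<lambda>z. Tminus u' U' z / (\<i> * \<kappa>0))" unfolding W_iff by auto
  show "dxi \<kappa>0 N (\<lambda>z. f z + g z) = (\<lambda>z. dxi \<kappa>0 N f z + dxi \<kappa>0 N g z)"
    unfolding fg Tm_add[OF assms] dxi_eq[OF assms U(1)] dxi_eq[OF assms U(2)]
      dxi_eq[OF assms PiN_add[OF U]] Tp_add ..
next
  fix f c assume "f \<in> Wxi \<kappa>0 N"
  then obtain u U where U: "U \<in> PiN N" and fg: "f = (\<lambda>z. Tminus u U z / (\<i> * \<kappa>0))" unfolding W_iff by auto
  show "dxi \<kappa>0 N (\<lambda>z. c * f z) = (\<lambda>z. c * dxi \<kappa>0 N f z)"
    unfolding fg Tm_smult[OF assms] dxi_eq[OF assms U(1)] dxi_eq[OF assms PiN_smult[OF U]] Tp_smult ..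
qed

lemma linop_Einv: assumes "\<kappa>0 \<noteq> 0" shows "linop (Einv \<kappa>0 N) (Wxi' N)"
  unfolding linop_def
proof (intro conjI ballI allI)
  fix f g assume "f \<in> Wxi' N" "g \<in> Wxi' N"
  then obtain u U u' U' where U: "U \<in> PiN N" "U' \<in> PiN N" and fg: "f = Tplus u U" "g = Tplus u' U'"
    unfolding W'_iff by auto
  show "Einv \<kappa>0 N (\<lambda>z. f z + g z) = (\<lambda>z. Einv \<kappa>0 N f z + Einv \<kappa>0 N g z)"
    unfolding fg Tp_add Einv_eq[OF U(1)] Einv_eq[OF U(2)] Einv_eq[OF PiN_add[OF U]] Tm_add[OF assms] ..
next
  fix f c assume "f \<in> Wxi' N"
  then obtain u U where U: "U \<in> PiN N" and fg: "f = Tplus u U" unfolding W'_iff by auto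
  show "Einv \<kappa>0 N (\<lambda>z. c * f z) = (\<lambda>z. c * Einv \<kappa>0 N f z)"
    unfolding fg Tp_smult Einv_eq[OF U(1)] Einv_eq[OF PiN_smult[OF U]] Tm_smult[OF assms] ..
qed

lemma dxi_in: assumes "\<kappa>0 \<noteq> 0" "w \<in> Wxi \<kappa>0 N" shows "dxi \<kappa>0 N w \<in> Wxi' N"
  using assms dxi_eq unfolding W_iff W'_iff by metis

lemma Einv_in: assumes "v \<in> Wxi' N" shows "Einv \<kappa>0 N v \<in> Wxi \<kappa>0 N"
  using assms Einv_eq unfolding W_iff W'_iff by metis

lemma Einv_dxi: assumes "\<kappa>0 \<noteq> 0" "w \<in> Wxi \<kappa>0 N" shows "Einv \<kappa>0 N (dxi \<kappa>0 N w) = w"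
  using assms dxi_eq Einv_eq unfolding W_iff by metis

lemma dxi_Einv: assumes "\<kappa>0 \<noteq> 0" "v \<in> Wxi' N" shows "dxi \<kappa>0 N (Einv \<kappa>0 N v) = v"
  using assms dxi_eq Einv_eq unfolding W'_iff by metis



definition Lift :: "((complex\<Rightarrow>complex)\<Rightarrow>(complex\<Rightarrow>complex)) \<Rightarrow> sfun \<Rightarrow> sfun" where
  "Lift L F = (\<lambda>z x. L (\<lambda>z'. F z' x) z)"

lemma dxiT_Lift: "dxiT \<kappa>0 N = Lift (dxi \<kappa>0 N)"
  by (rule ext) (simp add: dxiT_def Lift_def)

lemma linsp_smult: "linsp A \<Longrightarrow> f \<in> A \<Longrightarrow> (\<lambda>z. c * f z) \<in> A"
  unfolding linsp_def by blast
lemma linsp_add: "linsp A \<Longrightarrow> f \<in> A \<Longrightarrow> g \<in> A \<Longrightarrow> (\<lambda>z. f z + g z) \<in> A"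
  unfolding linsp_def by blast
lemma linsp_zero: "linsp A \<Longrightarrow> (\<lambda>z. 0) \<in> A"
  unfolding linsp_def by blast
lemma linsp_neg: "linsp A \<Longrightarrow> f \<in> A \<Longrightarrow> (\<lambda>z. - f z) \<in> A"
  using linsp_smult[of A f "-1"] by simp
lemma linop_add: "linop L A \<Longrightarrow> f \<in> A \<Longrightarrow> g \<in> A \<Longrightarrow> L (\<lambda>z. f z + g z) = (\<lambda>z. L f z + L g z)"
  unfolding linop_def by blast
lemma linop_smult: "linop L A \<Longrightarrow> f \<in> A \<Longrightarrow> L (\<lambda>z. c * f z) = (\<lambda>z. c * L f z)"
  unfolding linop_def by blast
lemma linop_neg: "linop L A \<Longrightarrow> f \<in> A \<Longrightarrow> L (\<lambda>z. - f z) = (\<lambda>z. - L f z)"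
  using linop_smult[of L A f "-1"] by simp
lemma linop_diff: "linsp A \<Longrightarrow> linop L A \<Longrightarrow> f \<in> A \<Longrightarrow> g \<in> A \<Longrightarrow> L (\<lambda>z. f z - g z) = (\<lambda>z. L f z - L g z)"
  using linop_add[of L A f "\<lambda>z. - g z"] linop_neg[of L A g] linsp_neg[of A g] by simp

lemma lin_sum_in:
  fixes n :: nat
  assumes "linsp A" "\<forall>k<n. a k \<in> A"
  shows "(\<lambda>z. \<Sum>k<n. c k * a k z) \<in> A"
  using assms(2)
proof (induction n)
  case 0 then show ?case using linsp_zero[OF assms(1)] by simp
next
  case (Suc n)
  have S: "(\<lambda>z. \<Sum>k<n. c k * a k z) \<in> A" using Suc by auto
  have cn: "(\<lambda>z. c n * a n z) \<in> A" using Suc.prems linsp_smult[OF assms(1)] by auto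
  show ?case using linsp_add[OF assms(1) S cn] by simp
qed

lemma lin_sum_L:
  fixes n :: nat
  assumes "linsp A" "linop L A" "\<forall>k<n. a k \<in> A"
  shows "L (\<lambda>z. \<Sum>k<n. c k * a k z) = (\<lambda>z. \<Sum>k<n. c k * L (a k) z)"
  using assms(3)
proof (induction n)
  case 0
  have "L (\<lambda>z. 0 * 0) = (\<lambda>z. 0 * L (\<lambda>z. 0) z)" using linop_smult[OF assms(2) linsp_zero[OF assms(1)], of 0] by simp
  then show ?case by simp
next
  case (Suc n)
  have S: "(\<lambda>z. \<Sum>k<n. c k * a k z) \<in> A" using Suc.prems lin_sum_in[OF assms(1)] by auto
  have LS: "L (\<lambda>z. \<Sum>k<n. c k * a k z) = (\<lambda>z. \<Sum>k<n. c k * L (a k) z)" using Suc by auto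
  have an: "a n \<in> A" using Suc.prems by auto
  have cn: "(\<lambda>z. c n * a n z) \<in> A" using an linsp_smult[OF assms(1)] by auto
  have "L (\<lambda>z. \<Sum>k<Suc n. c k * a k z) = L (\<lambda>z. (\<Sum>k<n. c k * a k z) + c n * a n z)" by simp
  also have "\<dots> = (\<lambda>z. L (\<lambda>z. \<Sum>k<n. c k * a k z) z + L (\<lambda>z. c n * a n z) z)"
    using linop_add[OF assms(2) S cn] by simp
  also have "\<dots> = (\<lambda>z. \<Sum>k<Suc n. c k * L (a k) z)"
    unfolding LS linop_smult[OF assms(2) an] by simp
  finally show ?case .
qed

lemma tens_repr: "F \<in> tensorP A B \<longleftrightarrow> (\<exists>(n::nat) a b. (\<forall>k<n. a k \<in> A \<and> b k \<in> B) \<and> F = (\<lambda>z x. \<Sum>k<n. a k z * b k x))"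
  unfolding tensorP_def by blast

lemma slice_in: assumes "linsp A" "F \<in> tensorP A B" shows "(\<lambda>z. F z x) \<in> A"
proof -
  obtain n :: nat and a b where ab: "\<forall>k<n. a k \<in> A \<and> b k \<in> B" and F: "F = (\<lambda>z x. \<Sum>k<n. a k z * b k x)"
    using assms(2) unfolding tens_repr by blast
  have "(\<lambda>z. \<Sum>k<n. b k x * a k z) \<in> A" by (rule lin_sum_in[OF assms(1), of n a "\<lambda>k. b k x"]) (use ab in auto)
  then show ?thesis unfolding F by (simp add: mult.commute)
qed

lemma Lift_tensor:
  fixes n :: nat
  assumes "linsp A" "linop L A" "\<forall>k<n. a k \<in> A"
  shows "Lift L (\<lambda>z x. \<Sum>k<n. a k z * b k x) = (\<lambda>z x. \<Sum>k<n. L (a k) z * b k x)"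
proof (rule ext, rule ext)
  fix z x
  have "Lift L (\<lambda>z x. \<Sum>k<n. a k z * b k x) z x = L (\<lambda>z. \<Sum>k<n. b k x * a k z) z"
    unfolding Lift_def by (simp add: mult.commute)
  also have "\<dots> = (\<Sum>k<n. b k x * L (a k) z)" using lin_sum_L[OF assms] by simp
  finally show "Lift L (\<lambda>z x. \<Sum>k<n. a k z * b k x) z x = (\<Sum>k<n. L (a k) z * b k x)"
    by (simp add: mult.commute)
qed

lemma Lift_in:
  assumes "linsp A" "linop L A" "\<And>f. f \<in> A \<Longrightarrow> L f \<in> A'" "F \<in> tensorP A B"
  shows "Lift L F \<in> tensorP A' B"
proof -
  obtain n :: nat and a b where ab: "\<forall>k<n. a k \<in> A \<and> b k \<in> B" and F: "F = (\<lambda>z x. \<Sum>k<n. a k z * b k x)"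
    using assms(4) unfolding tens_repr by blast
  have "Lift L F = (\<lambda>z x. \<Sum>k<n. L (a k) z * b k x)" unfolding F by (rule Lift_tensor[OF assms(1,2)]) (use ab in auto)
  moreover have "\<forall>k<n. L (a k) \<in> A' \<and> b k \<in> B" using ab assms(3) by blast
  ultimately show ?thesis unfolding tens_repr by (intro exI[of _ n] exI[of _ "\<lambda>k. L (a k)"] exI[of _ b] conjI) auto
qed

lemma Lift_inv:
  assumes "\<And>x. (\<lambda>z. F z x) \<in> A" "\<And>f. f \<in> A \<Longrightarrow> L1 (L2 f) = f"
  shows "Lift L1 (Lift L2 F) = F"
  unfolding Lift_def using assms by simp

lemma Lift_add:
  assumes "linop L A" "\<And>x. (\<lambda>z. F z x) \<in> A" "\<And>x. (\<lambda>z. G z x) \<in> A"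
  shows "Lift L (\<lambda>z x. F z x + G z x) = (\<lambda>z x. Lift L F z x + Lift L G z x)"
  unfolding Lift_def using linop_add[OF assms(1) assms(2) assms(3)] by simp

lemma Lift_neg:
  assumes "linop L A" "\<And>x. (\<lambda>z. F z x) \<in> A"
  shows "Lift L (\<lambda>z x. - F z x) = (\<lambda>z x. - Lift L F z x)"
  unfolding Lift_def using linop_neg[OF assms(1) assms(2)] by simp

lemma Lift_diff:
  assumes "linsp A" "linop L A" "\<And>x. (\<lambda>z. F z x) \<in> A" "\<And>x. (\<lambda>z. G z x) \<in> A"
  shows "Lift L (\<lambda>z x. F z x - G z x) = (\<lambda>z x. Lift L F z x - Lift L G z x)"
  unfolding Lift_def using linop_diff[OF assms(1,2) assms(3) assms(4)] by simp

lemma sum_concat: "(\<Sum>k<(n::nat)+m. f k) = (\<Sum>k<n. f k) + (\<Sum>k<m. f (n+k)::complex)"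
  by (induction m) (simp_all add: add_ac)

lemma tens_add:
  assumes "F \<in> tensorP A B" "G \<in> tensorP A B"
  shows "(\<lambda>z x. F z x + G z x) \<in> tensorP A B"
proof -
  obtain n :: nat and a b where ab: "\<forall>k<n. a k \<in> A \<and> b k \<in> B" and F: "F = (\<lambda>z x. \<Sum>k<n. a k z * b k x)"
    using assms(1) unfolding tens_repr by blast
  obtain m :: nat and a' b' where ab': "\<forall>k<m. a' k \<in> A \<and> b' k \<in> B" and G: "G = (\<lambda>z x. \<Sum>k<m. a' k z * b' k x)"
    using assms(2) unfolding tens_repr by blast
  define a2 where "a2 k = (if k < n then a k else a' (k - n))" for k
  define b2 where "b2 k = (if k < n then b k else b' (k - n))" for k
  have "(\<lambda>z x. F z x + G z x) = (\<lambda>z x. \<Sum>k<n+m. a2 k z * b2 k x)"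
    unfolding sum_concat F G a2_def b2_def by simp
  moreover have "\<forall>k<n+m. a2 k \<in> A \<and> b2 k \<in> B" using ab ab' unfolding a2_def b2_def by auto
  ultimately show ?thesis unfolding tens_repr by (intro exI[of _ "n+m"] exI[of _ a2] exI[of _ b2] conjI) auto
qed

lemma tens_neg:
  assumes "linsp A" "F \<in> tensorP A B"
  shows "(\<lambda>z x. - F z x) \<in> tensorP A B"
proof -
  obtain n :: nat and a b where ab: "\<forall>k<n. a k \<in> A \<and> b k \<in> B" and F: "F = (\<lambda>z x. \<Sum>k<n. a k z * b k x)"
    using assms(2) unfolding tens_repr by blast
  have "(\<lambda>z x. - F z x) = (\<lambda>z x. \<Sum>k<n. (\<lambda>z. - a k z) z * b k x)"
    unfolding F by (simp add: sum_negf)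
  moreover have "\<forall>k<n. (\<lambda>z. - a k z) \<in> A \<and> b k \<in> B" using ab linsp_neg[OF assms(1)] by auto
  ultimately show ?thesis unfolding tens_repr by (intro exI[of _ n] exI[of _ "\<lambda>k z. - a k z"] exI[of _ b] conjI) auto
qed

lemma tens_diff:
  assumes "linsp A" "F \<in> tensorP A B" "G \<in> tensorP A B"
  shows "(\<lambda>z x. F z x - G z x) \<in> tensorP A B"
  using tens_add[OF assms(2) tens_neg[OF assms(1,3)]] by simp

lemma tens_zero: "zf \<in> tensorP A B"
  unfolding tens_repr zf_def by (rule exI[of _ 0]) simp

lemma d1_zf: "d1 zf = zf" unfolding d1_def zf_def by simp
lemma d2_zf: "d2 zf = zf" unfolding d2_def zf_def by simp

lemma tens_hd1: assumes "\<forall>k<(n::nat). b k \<in> Pk m" shows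
  "((\<lambda>t. \<Sum>k<n. a k z * b k (t,y)) has_vector_derivative (\<Sum>k<n. a k z * P1 (b k) (s,y))) (at s)"
proof (rule has_vector_derivative_sum)
  fix k assume "k \<in> {..<n}"
  then have "b k \<in> Pk m" using assms by auto
  then show "((\<lambda>t. a k z * b k (t,y)) has_vector_derivative (a k z * P1 (b k) (s,y))) (at s)"
    by (intro has_vector_derivative_mult_right Pk_hd1)
qed

lemma tens_hd2: assumes "\<forall>k<(n::nat). b k \<in> Pk m" shows
  "((\<lambda>t. \<Sum>k<n. a k z * b k (y,t)) has_vector_derivative (\<Sum>k<n. a k z * P2 (b k) (y,s))) (at s)"
proof (rule has_vector_derivative_sum)
  fix k assume "k \<in> {..<n}"
  then have "b k \<in> Pk m" using assms by auto
  then show "((\<lambda>t. a k z * b k (y,t)) has_vector_derivative (a k z * P2 (b k) (y,s))) (at s)"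
    by (intro has_vector_derivative_mult_right Pk_hd2)
qed

lemma tens_d1: assumes "\<forall>k<(n::nat). b k \<in> Pk m" shows
  "d1 (\<lambda>z x. \<Sum>k<n. a k z * b k x) = (\<lambda>z x. \<Sum>k<n. a k z * P1 (b k) x)"
proof (rule ext, rule ext)
  fix z x
  show "d1 (\<lambda>z x. \<Sum>k<n. a k z * b k x) z x = (\<Sum>k<n. a k z * P1 (b k) x)"
    unfolding d1_def using vector_derivative_at[OF tens_hd1[OF assms, of a z "snd x" "fst x"]] by (simp only: prod.collapse)
qed

lemma tens_d2: assumes "\<forall>k<(n::nat). b k \<in> Pk m" shows
  "d2 (\<lambda>z x. \<Sum>k<n. a k z * b k x) = (\<lambda>z x. \<Sum>k<n. a k z * P2 (b k) x)"
proof (rule ext, rule ext)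
  fix z x
  show "d2 (\<lambda>z x. \<Sum>k<n. a k z * b k x) z x = (\<Sum>k<n. a k z * P2 (b k) x)"
    unfolding d2_def using vector_derivative_at[OF tens_hd2[OF assms, of a z "fst x" "snd x"]] by (simp only: prod.collapse)
qed

lemma T_d1_in: assumes "F \<in> tensorP A (Pk m)" shows "d1 F \<in> tensorP A (Pk (m - 1))"
proof -
  obtain n :: nat and a b where ab: "\<forall>k<n. a k \<in> A \<and> b k \<in> Pk m" and F: "F = (\<lambda>z x. \<Sum>k<n. a k z * b k x)"
    using assms unfolding tens_repr by blast
  have bb: "\<forall>k<n. b k \<in> Pk m" using ab by auto
  have "d1 F = (\<lambda>z x. \<Sum>k<n. a k z * P1 (b k) x)" unfolding F by (rule tens_d1[OF bb])
  moreover have "\<forall>k<n. a k \<in> A \<and> P1 (b k) \<in> Pk (m - 1)" using ab Pk_P1 by blast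
  ultimately show ?thesis unfolding tens_repr by (intro exI[of _ n] exI[of _ a] exI[of _ "\<lambda>k. P1 (b k)"] conjI) auto
qed

lemma T_d2_in: assumes "F \<in> tensorP A (Pk m)" shows "d2 F \<in> tensorP A (Pk (m - 1))"
proof -
  obtain n :: nat and a b where ab: "\<forall>k<n. a k \<in> A \<and> b k \<in> Pk m" and F: "F = (\<lambda>z x. \<Sum>k<n. a k z * b k x)"
    using assms unfolding tens_repr by blast
  have bb: "\<forall>k<n. b k \<in> Pk m" using ab by auto
  have "d2 F = (\<lambda>z x. \<Sum>k<n. a k z * P2 (b k) x)" unfolding F by (rule tens_d2[OF bb])
  moreover have "\<forall>k<n. a k \<in> A \<and> P2 (b k) \<in> Pk (m - 1)" using ab Pk_P2 by blast
  ultimately show ?thesis unfolding tens_repr by (intro exI[of _ n] exI[of _ a] exI[of _ "\<lambda>k. P2 (b k)"] conjI) auto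
qed

lemma T_hd1: assumes "F \<in> tensorP A (Pk m)"
  shows "((\<lambda>t. F z (t,y)) has_vector_derivative d1 F z (s,y)) (at s)"
proof -
  obtain n :: nat and a b where ab: "\<forall>k<n. a k \<in> A \<and> b k \<in> Pk m" and F: "F = (\<lambda>z x. \<Sum>k<n. a k z * b k x)"
    using assms unfolding tens_repr by blast
  have bb: "\<forall>k<n. b k \<in> Pk m" using ab by auto
  have "d1 F = (\<lambda>z x. \<Sum>k<n. a k z * P1 (b k) x)" unfolding F by (rule tens_d1[OF bb])
  then have e: "d1 F z (s,y) = (\<Sum>k<n. a k z * P1 (b k) (s,y))" by (simp only:)
  show ?thesis unfolding e unfolding F by (rule tens_hd1[OF bb])
qed

lemma T_hd2: assumes "F \<in> tensorP A (Pk m)"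
  shows "((\<lambda>t. F z (y,t)) has_vector_derivative d2 F z (y,s)) (at s)"
proof -
  obtain n :: nat and a b where ab: "\<forall>k<n. a k \<in> A \<and> b k \<in> Pk m" and F: "F = (\<lambda>z x. \<Sum>k<n. a k z * b k x)"
    using assms unfolding tens_repr by blast
  have bb: "\<forall>k<n. b k \<in> Pk m" using ab by auto
  have "d2 F = (\<lambda>z x. \<Sum>k<n. a k z * P2 (b k) x)" unfolding F by (rule tens_d2[OF bb])
  then have e: "d2 F z (y,s) = (\<Sum>k<n. a k z * P2 (b k) (y,s))" by (simp only:)
  show ?thesis unfolding e unfolding F by (rule tens_hd2[OF bb])
qed

lemma T_d1_add: assumes "F \<in> tensorP A (Pk m)" "G \<in> tensorP A' (Pk m')"
  shows "d1 (\<lambda>z x. F z x + G z x) = (\<lambda>z x. d1 F z x + d1 G z x)"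
proof (rule ext, rule ext)
  fix z x
  have h: "((\<lambda>t. F z (t, snd x) + G z (t, snd x)) has_vector_derivative (d1 F z (fst x, snd x) + d1 G z (fst x, snd x))) (at (fst x))"
    by (rule has_vector_derivative_add[OF T_hd1[OF assms(1)] T_hd1[OF assms(2)]])
  have "d1 (\<lambda>z x. F z x + G z x) z x = vector_derivative (\<lambda>t. F z (t, snd x) + G z (t, snd x)) (at (fst x))"
    unfolding d1_def ..
  also have "\<dots> = d1 F z (fst x, snd x) + d1 G z (fst x, snd x)" by (rule vector_derivative_at[OF h])
  finally show "d1 (\<lambda>z x. F z x + G z x) z x = d1 F z x + d1 G z x" by simp
qed

lemma T_d1_diff: assumes "F \<in> tensorP A (Pk m)" "G \<in> tensorP A' (Pk m')"
  shows "d1 (\<lambda>z x. F z x - G z x) = (\<lambda>z x. d1 F z x - d1 G z x)"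
proof (rule ext, rule ext)
  fix z x
  have h: "((\<lambda>t. F z (t, snd x) - G z (t, snd x)) has_vector_derivative (d1 F z (fst x, snd x) - d1 G z (fst x, snd x))) (at (fst x))"
    by (rule has_vector_derivative_diff[OF T_hd1[OF assms(1)] T_hd1[OF assms(2)]])
  have "d1 (\<lambda>z x. F z x - G z x) z x = vector_derivative (\<lambda>t. F z (t, snd x) - G z (t, snd x)) (at (fst x))"
    unfolding d1_def ..
  also have "\<dots> = d1 F z (fst x, snd x) - d1 G z (fst x, snd x)" by (rule vector_derivative_at[OF h])
  finally show "d1 (\<lambda>z x. F z x - G z x) z x = d1 F z x - d1 G z x" by simp
qed

lemma T_d1_neg: assumes "F \<in> tensorP A (Pk m)"
  shows "d1 (\<lambda>z x. - F z x) = (\<lambda>z x. - d1 F z x)"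
proof (rule ext, rule ext)
  fix z x
  have h: "((\<lambda>t. - F z (t, snd x)) has_vector_derivative (- d1 F z (fst x, snd x))) (at (fst x))"
    by (rule has_vector_derivative_minus[OF T_hd1[OF assms(1)]])
  have "d1 (\<lambda>z x. - F z x) z x = vector_derivative (\<lambda>t. - F z (t, snd x)) (at (fst x))"
    unfolding d1_def ..
  also have "\<dots> = - d1 F z (fst x, snd x)" by (rule vector_derivative_at[OF h])
  finally show "d1 (\<lambda>z x. - F z x) z x = - d1 F z x" by simp
qed

lemma T_d2_add: assumes "F \<in> tensorP A (Pk m)" "G \<in> tensorP A' (Pk m')"
  shows "d2 (\<lambda>z x. F z x + G z x) = (\<lambda>z x. d2 F z x + d2 G z x)"
proof (rule ext, rule ext)
  fix z x
  have h: "((\<lambda>t. F z (fst x, t) + G z (fst x, t)) has_vector_derivative (d2 F z (fst x, snd x) + d2 G z (fst x, snd x))) (at (snd x))"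
    by (rule has_vector_derivative_add[OF T_hd2[OF assms(1)] T_hd2[OF assms(2)]])
  have "d2 (\<lambda>z x. F z x + G z x) z x = vector_derivative (\<lambda>t. F z (fst x, t) + G z (fst x, t)) (at (snd x))"
    unfolding d2_def ..
  also have "\<dots> = d2 F z (fst x, snd x) + d2 G z (fst x, snd x)" by (rule vector_derivative_at[OF h])
  finally show "d2 (\<lambda>z x. F z x + G z x) z x = d2 F z x + d2 G z x" by simp
qed

lemma T_d2_neg: assumes "F \<in> tensorP A (Pk m)"
  shows "d2 (\<lambda>z x. - F z x) = (\<lambda>z x. - d2 F z x)"
proof (rule ext, rule ext)
  fix z x
  have h: "((\<lambda>t. - F z (fst x, t)) has_vector_derivative (- d2 F z (fst x, snd x))) (at (snd x))"
    by (rule has_vector_derivative_minus[OF T_hd2[OF assms(1)]])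
  have "d2 (\<lambda>z x. - F z x) z x = vector_derivative (\<lambda>t. - F z (fst x, t)) (at (snd x))"
    unfolding d2_def ..
  also have "\<dots> = - d2 F z (fst x, snd x)" by (rule vector_derivative_at[OF h])
  finally show "d2 (\<lambda>z x. - F z x) z x = - d2 F z x" by simp
qed

lemma T_d12: assumes "F \<in> tensorP A (Pk m)" shows "d1 (d2 F) = d2 (d1 F)"
proof -
  obtain n :: nat and a b where ab: "\<forall>k<n. a k \<in> A \<and> b k \<in> Pk m" and F: "F = (\<lambda>z x. \<Sum>k<n. a k z * b k x)"
    using assms unfolding tens_repr by blast
  have bb: "\<forall>k<n. b k \<in> Pk m" using ab by auto
  have 1: "d2 F = (\<lambda>z x. \<Sum>k<n. a k z * P2 (b k) x)" unfolding F by (rule tens_d2[OF bb])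
  have 2: "d1 F = (\<lambda>z x. \<Sum>k<n. a k z * P1 (b k) x)" unfolding F by (rule tens_d1[OF bb])
  have "d1 (d2 F) = (\<lambda>z x. \<Sum>k<n. a k z * P1 (P2 (b k)) x)" unfolding 1
    by (rule tens_d1[of _ _ "m - 1"]) (use ab Pk_P2 in blast)
  moreover have "d2 (d1 F) = (\<lambda>z x. \<Sum>k<n. a k z * P2 (P1 (b k)) x)" unfolding 2
    by (rule tens_d2[of _ _ "m - 1"]) (use ab Pk_P1 in blast)
  moreover have "\<And>k. k < n \<Longrightarrow> P1 (P2 (b k)) = P2 (P1 (b k))" using ab Pk_comm by blast
  ultimately show ?thesis by simp
qed

lemma T_d1_Lift: assumes "linsp A" "linop L A" "F \<in> tensorP A (Pk m)"
  shows "d1 (Lift L F) = Lift L (d1 F)"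
proof -
  obtain n :: nat and a b where ab: "\<forall>k<n. a k \<in> A \<and> b k \<in> Pk m" and F: "F = (\<lambda>z x. \<Sum>k<n. a k z * b k x)"
    using assms(3) unfolding tens_repr by blast
  have a: "\<forall>k<n. a k \<in> A" and b: "\<forall>k<n. b k \<in> Pk m" using ab by auto
  show ?thesis unfolding F Lift_tensor[OF assms(1,2) a] tens_d1[OF b] by (rule refl)
qed

lemma T_d2_Lift: assumes "linsp A" "linop L A" "F \<in> tensorP A (Pk m)"
  shows "d2 (Lift L F) = Lift L (d2 F)"
proof -
  obtain n :: nat and a b where ab: "\<forall>k<n. a k \<in> A \<and> b k \<in> Pk m" and F: "F = (\<lambda>z x. \<Sum>k<n. a k z * b k x)"
    using assms(3) unfolding tens_repr by blast
  have a: "\<forall>k<n. a k \<in> A" and b: "\<forall>k<n. b k \<in> Pk m" using ab by auto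
  show ?thesis unfolding F Lift_tensor[OF assms(1,2) a] tens_d2[OF b] by (rule refl)
qed



lemma h_neg_add: "-(a::complex) + b = 0 \<Longrightarrow> b = a"
  by (simp add: add_eq_0_iff)
lemma h_sub: "(a::complex) - b = 0 \<Longrightarrow> a = b"
  by simp
lemma h3: "(a::complex) + - b + c = 0 \<Longrightarrow> a = b - c"
  by (simp add: algebra_simps add_eq_0_iff eq_diff_eq)

theorem theorem1:
  fixes \<kappa>0 :: complex and N p :: nat and a b c :: "real \<times> real"
  assumes "Re \<kappa>0 > 0"
    and "p \<ge> 2"
    and "(fst b - fst a) * (snd c - snd a) - (snd b - snd a) * (fst c - fst a) \<noteq> 0"
  shows "gradK \<kappa>0 N ` WK \<kappa>0 N p = {V \<in> VK \<kappa>0 N p. curlK \<kappa>0 N V = (zf, (zf, zf))} \<and>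
    curlK \<kappa>0 N ` VK \<kappa>0 N p = {Q \<in> QK \<kappa>0 N p. divK \<kappa>0 N Q = zf} \<and>
    divK \<kappa>0 N ` QK \<kappa>0 N p = XK N p"
proof -
  have k: "\<kappa>0 \<noteq> 0" using assms(1) by auto
  define W where "W = Wxi \<kappa>0 N"
  define W' where "W' = Wxi' N"
  define D where "D = Lift (dxi \<kappa>0 N)"
  define E where "E = Lift (Einv \<kappa>0 N)"
  have LW: "linsp W" unfolding W_def by (rule linsp_W[OF k])
  have LW': "linsp W'" unfolding W'_def by (rule linsp_W')
  have LD: "linop (dxi \<kappa>0 N) W" unfolding W_def by (rule linop_dxi[OF k])
  have LE: "linop (Einv \<kappa>0 N) W'" unfolding W'_def by (rule linop_Einv[OF k])
  have D_in: "D F \<in> tensorP W' B" if "F \<in> tensorP W B" for F B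
    unfolding D_def by (rule Lift_in[OF LW LD _ that]) (use dxi_in[OF k] in \<open>auto simp: W_def W'_def\<close>)
  have E_in: "E F \<in> tensorP W B" if "F \<in> tensorP W' B" for F B
    unfolding E_def by (rule Lift_in[OF LW' LE _ that]) (use Einv_in in \<open>auto simp: W_def W'_def\<close>)
  have ED: "E (D F) = F" if "F \<in> tensorP W B" for F B
    unfolding E_def D_def by (rule Lift_inv[OF slice_in[OF LW that]]) (use Einv_dxi[OF k] in \<open>auto simp: W_def\<close>)
  have DE: "D (E F) = F" if "F \<in> tensorP W' B" for F B
    unfolding E_def D_def by (rule Lift_inv[OF slice_in[OF LW' that]]) (use dxi_Einv[OF k] in \<open>auto simp: W'_def\<close>)
  have D1: "d1 (D F) = D (d1 F)" if "F \<in> tensorP W (Pk m)" for F m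
    unfolding D_def by (rule T_d1_Lift[OF LW LD that])
  have D2: "d2 (D F) = D (d2 F)" if "F \<in> tensorP W (Pk m)" for F m
    unfolding D_def by (rule T_d2_Lift[OF LW LD that])
  have E1: "d1 (E F) = E (d1 F)" if "F \<in> tensorP W' (Pk m)" for F m
    unfolding E_def by (rule T_d1_Lift[OF LW' LE that])
  have E2: "d2 (E F) = E (d2 F)" if "F \<in> tensorP W' (Pk m)" for F m
    unfolding E_def by (rule T_d2_Lift[OF LW' LE that])
  have D_add: "D (\<lambda>z x. F z x + G z x) = (\<lambda>z x. D F z x + D G z x)"
    if "F \<in> tensorP W B" "G \<in> tensorP W B'" for F G B B'
    unfolding D_def by (rule Lift_add[OF LD slice_in[OF LW that(1)] slice_in[OF LW that(2)]])
  have D_neg: "D (\<lambda>z x. - F z x) = (\<lambda>z x. - D F z x)"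
    if "F \<in> tensorP W B" for F B
    unfolding D_def by (rule Lift_neg[OF LD slice_in[OF LW that(1)]])
  have E_diff: "E (\<lambda>z x. F z x - G z x) = (\<lambda>z x. E F z x - E G z x)"
    if "F \<in> tensorP W' B" "G \<in> tensorP W' B'" for F G B B'
    unfolding E_def by (rule Lift_diff[OF LW' LE slice_in[OF LW' that(1)] slice_in[OF LW' that(2)]])
  have pm: "p - 1 - 1 = p - 2" by arith
  have gK: "gradK \<kappa>0 N F = (D F, (d1 F, d2 F))" for F
    unfolding gradK_def dxiT_Lift D_def ..
  have cK: "curlK \<kappa>0 N (u,(v1,v2)) = ((\<lambda>z x. - d2 v1 z x + d1 v2 z x),
       ((\<lambda>z x. d2 u z x - D v2 z x), (\<lambda>z x. - d1 u z x + D v1 z x)))" for u v1 v2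
    unfolding curlK_def dxiT_Lift D_def by simp
  have dK: "divK \<kappa>0 N (q,(w1,w2)) = (\<lambda>z x. D q z x + d1 w1 z x + d2 w2 z x)" for q w1 w2
    unfolding divK_def dxiT_Lift D_def by simp
  have WK: "WK \<kappa>0 N p = tensorP W (Pk p)" unfolding WK_def W_def ..
  have XK: "XK N p = tensorP W' (Pk (p - 2))" unfolding XK_def W'_def ..
  have VK: "(u,(v1,v2)) \<in> VK \<kappa>0 N p \<longleftrightarrow> u \<in> tensorP W' (Pk p) \<and> v1 \<in> tensorP W (Pk (p - 1)) \<and> v2 \<in> tensorP W (Pk (p - 1))"
    for u v1 v2 unfolding VK_def W_def W'_def by simp
  have QK: "(q,(w1,w2)) \<in> QK \<kappa>0 N p \<longleftrightarrow> q \<in> tensorP W (Pk (p - 2)) \<and>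
      (\<exists>g1 g2. g1 \<in> tensorP W' (Pk (p - 1)) \<and> g2 \<in> tensorP W' (Pk (p - 1)) \<and> w1 = (\<lambda>z x. - g2 z x) \<and> w2 = g1)"
    for q w1 w2 unfolding QK_def W_def W'_def by simp

  have P1: "gradK \<kappa>0 N ` WK \<kappa>0 N p = {V \<in> VK \<kappa>0 N p. curlK \<kappa>0 N V = (zf, (zf, zf))}"
  proof (rule set_eqI, rule iffI)
    fix V assume "V \<in> gradK \<kappa>0 N ` WK \<kappa>0 N p"
    then obtain F where F: "F \<in> tensorP W (Pk p)" and V: "V = gradK \<kappa>0 N F" unfolding WK by auto
    have mem: "(D F, (d1 F, d2 F)) \<in> VK \<kappa>0 N p" unfolding VK using D_in[OF F] T_d1_in[OF F] T_d2_in[OF F] by simp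
    have "curlK \<kappa>0 N (D F, (d1 F, d2 F)) = (zf, (zf, zf))"
      unfolding cK D1[OF F] D2[OF F] T_d12[OF F] by (simp add: zf_def)
    with mem show "V \<in> {V \<in> VK \<kappa>0 N p. curlK \<kappa>0 N V = (zf, (zf, zf))}" unfolding V gK by simp
  next
    fix V assume "V \<in> {V \<in> VK \<kappa>0 N p. curlK \<kappa>0 N V = (zf, (zf, zf))}"
    then obtain u v1 v2 where V: "V = (u,(v1,v2))" and m: "(u,(v1,v2)) \<in> VK \<kappa>0 N p"
      and cz: "curlK \<kappa>0 N (u,(v1,v2)) = (zf, (zf, zf))" by (metis (mono_tags, lifting) mem_Collect_eq prod.collapse)
    have u: "u \<in> tensorP W' (Pk p)" and v1: "v1 \<in> tensorP W (Pk (p - 1))" and v2: "v2 \<in> tensorP W (Pk (p - 1))"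
      using m unfolding VK by auto
    have e2: "(\<lambda>z x. d2 u z x - D v2 z x) = zf" and e3: "(\<lambda>z x. - d1 u z x + D v1 z x) = zf"
      using cz unfolding cK by auto
    have Dv1: "D v1 = d1 u"
    proof (rule ext, rule ext)
      fix z x
      have "- d1 u z x + D v1 z x = 0" using fun_cong[OF fun_cong[OF e3, of z], of x] by (simp add: zf_def)
      then show "D v1 z x = d1 u z x" by (rule h_neg_add)
    qed
    have Dv2: "D v2 = d2 u"
    proof (rule ext, rule ext)
      fix z x
      have "d2 u z x - D v2 z x = 0" using fun_cong[OF fun_cong[OF e2, of z], of x] by (simp add: zf_def)
      then show "D v2 z x = d2 u z x" by (simp add: h_sub)
    qed
    have Eu: "E u \<in> tensorP W (Pk p)" by (rule E_in[OF u])
    have "gradK \<kappa>0 N (E u) = (u, (v1, v2))"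
      unfolding gK DE[OF u] E1[OF u] E2[OF u] Dv1[symmetric] Dv2[symmetric] ED[OF v1] ED[OF v2] ..
    then show "V \<in> gradK \<kappa>0 N ` WK \<kappa>0 N p" unfolding V WK using Eu by (metis image_eqI)
  qed

  have P2: "curlK \<kappa>0 N ` VK \<kappa>0 N p = {Q \<in> QK \<kappa>0 N p. divK \<kappa>0 N Q = zf}"
  proof (rule set_eqI, rule iffI)
    fix Q assume "Q \<in> curlK \<kappa>0 N ` VK \<kappa>0 N p"
    then obtain V where Vm: "V \<in> VK \<kappa>0 N p" and Q: "Q = curlK \<kappa>0 N V" by auto
    obtain u v1 v2 where V: "V = (u,(v1,v2))" by (metis prod.collapse)
    have u: "u \<in> tensorP W' (Pk p)" and v1: "v1 \<in> tensorP W (Pk (p - 1))" and v2: "v2 \<in> tensorP W (Pk (p - 1))"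
      using Vm unfolding V VK by auto
    have mc1: "(\<lambda>z x. - d2 v1 z x + d1 v2 z x) \<in> tensorP W (Pk (p - 2))"
      using tens_add[OF tens_neg[OF LW T_d2_in[OF v1]] T_d1_in[OF v2]] unfolding pm .
    have mg1: "(\<lambda>z x. - d1 u z x + D v1 z x) \<in> tensorP W' (Pk (p - 1))"
      using tens_add[OF tens_neg[OF LW' T_d1_in[OF u]] D_in[OF v1]] by simp
    have mc2: "(\<lambda>z x. d2 u z x - D v2 z x) \<in> tensorP W' (Pk (p - 1))"
      using tens_diff[OF LW' T_d2_in[OF u] D_in[OF v2]] by simp
    have mg2: "(\<lambda>z x. - (d2 u z x - D v2 z x)) \<in> tensorP W' (Pk (p - 1))"
      using tens_neg[OF LW' mc2] by simp
    have inQ: "curlK \<kappa>0 N V \<in> QK \<kappa>0 N p"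
      unfolding V cK QK using mc1 mg1 mg2 by (intro conjI exI[of _ "\<lambda>z x. - d1 u z x + D v1 z x"] exI[of _ "\<lambda>z x. - (d2 u z x - D v2 z x)"]) auto
    have a1: "D (\<lambda>z x. - d2 v1 z x + d1 v2 z x) = (\<lambda>z x. - d2 (D v1) z x + d1 (D v2) z x)"
      unfolding D_add[OF tens_neg[OF LW T_d2_in[OF v1]] T_d1_in[OF v2]] D_neg[OF T_d2_in[OF v1]]
        D1[OF v2] D2[OF v1] ..
    have a2: "d1 (\<lambda>z x. d2 u z x - D v2 z x) = (\<lambda>z x. d1 (d2 u) z x - d1 (D v2) z x)"
      by (rule T_d1_diff[OF T_d2_in[OF u] D_in[OF v2]])
    have a3: "d2 (\<lambda>z x. - d1 u z x + D v1 z x) = (\<lambda>z x. - d2 (d1 u) z x + d2 (D v1) z x)"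
      unfolding T_d2_add[OF tens_neg[OF LW' T_d1_in[OF u]] D_in[OF v1]] T_d2_neg[OF T_d1_in[OF u]] ..
    have "divK \<kappa>0 N (curlK \<kappa>0 N V) = zf"
      unfolding V cK dK a1 a2 a3 T_d12[OF u] by (simp add: zf_def)
    with inQ show "Q \<in> {Q \<in> QK \<kappa>0 N p. divK \<kappa>0 N Q = zf}" unfolding Q by simp
  next
    fix Q assume "Q \<in> {Q \<in> QK \<kappa>0 N p. divK \<kappa>0 N Q = zf}"
    then obtain q w1 w2 where Q: "Q = (q,(w1,w2))" and m: "(q,(w1,w2)) \<in> QK \<kappa>0 N p"
      and dz: "divK \<kappa>0 N (q,(w1,w2)) = zf" by (metis (mono_tags, lifting) mem_Collect_eq prod.collapse)
    obtain g1 g2 where q: "q \<in> tensorP W (Pk (p - 2))" and g1: "g1 \<in> tensorP W' (Pk (p - 1))"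
      and g2: "g2 \<in> tensorP W' (Pk (p - 1))" and w1: "w1 = (\<lambda>z x. - g2 z x)" and w2: "w2 = g1"
      using m unfolding QK by auto
    have Dq: "D q = (\<lambda>z x. d1 g2 z x - d2 g1 z x)"
    proof (rule ext, rule ext)
      fix z x
      have "D q z x + - d1 g2 z x + d2 g1 z x = 0"
        using fun_cong[OF fun_cong[OF dz, of z], of x] unfolding dK w1 w2 T_d1_neg[OF g2] by (simp add: zf_def)
      then show "D q z x = d1 g2 z x - d2 g1 z x" by (rule h3)
    qed
    have qE: "q = (\<lambda>z x. E (d1 g2) z x - E (d2 g1) z x)"
      using ED[OF q] unfolding Dq E_diff[OF T_d1_in[OF g2] T_d2_in[OF g1]] by simp
    define V where "V = (zf, (E g1, E g2))"
    have Vm: "V \<in> VK \<kappa>0 N p" unfolding V_def VK using tens_zero E_in[OF g1] E_in[OF g2] by simp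
    have "curlK \<kappa>0 N V = (q, (w1, w2))"
      unfolding V_def cK d1_zf d2_zf DE[OF g1] DE[OF g2] E1[OF g2] E2[OF g1] qE w1 w2
      by (simp add: zf_def fun_eq_iff)
    then show "Q \<in> curlK \<kappa>0 N ` VK \<kappa>0 N p" unfolding Q using Vm by (metis image_eqI)
  qed

  have P3: "divK \<kappa>0 N ` QK \<kappa>0 N p = XK N p"
  proof (rule set_eqI, rule iffI)
    fix f assume "f \<in> divK \<kappa>0 N ` QK \<kappa>0 N p"
    then obtain Q where Qm: "Q \<in> QK \<kappa>0 N p" and f: "f = divK \<kappa>0 N Q" by auto
    obtain q w1 w2 where Q: "Q = (q,(w1,w2))" by (metis prod.collapse)
    obtain g1 g2 where q: "q \<in> tensorP W (Pk (p - 2))" and g1: "g1 \<in> tensorP W' (Pk (p - 1))"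
      and g2: "g2 \<in> tensorP W' (Pk (p - 1))" and w1: "w1 = (\<lambda>z x. - g2 z x)" and w2: "w2 = g1"
      using Qm unfolding Q QK by auto
    have mw1: "d1 w1 \<in> tensorP W' (Pk (p - 2))" unfolding w1 using T_d1_in[OF tens_neg[OF LW' g2]] unfolding pm .
    have mw2: "d2 w2 \<in> tensorP W' (Pk (p - 2))" unfolding w2 using T_d2_in[OF g1] unfolding pm .
    have "(\<lambda>z x. D q z x + d1 w1 z x + d2 w2 z x) \<in> tensorP W' (Pk (p - 2))"
      using tens_add[OF tens_add[OF D_in[OF q] mw1] mw2] .
    then show "f \<in> XK N p" unfolding f Q dK XK .
  next
    fix f assume "f \<in> XK N p"
    then have f: "f \<in> tensorP W' (Pk (p - 2))" unfolding XK .
    have Qm: "(E f, (zf, zf)) \<in> QK \<kappa>0 N p" unfolding QK using E_in[OF f] tens_zero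
      by (intro conjI exI[of _ zf]) (auto simp: zf_def)
    have "divK \<kappa>0 N (E f, (zf, zf)) = f" unfolding dK DE[OF f] d1_zf d2_zf by (simp add: zf_def)
    then show "f \<in> divK \<kappa>0 N ` QK \<kappa>0 N p" using Qm by (metis image_eqI)
  qed

  show ?thesis using P1 P2 P3 by blast
qed


end
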